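(* Let $\Gamma$ be a finite group, $S\subseteq\Gamma$, $g\ge 3$, and $\Sigma$ an $|S|$-list of elements of $\Gamma$. If there exists an $RSM_\Gamma(S,g;\Sigma)$, then $\mathrm{GOP}(C_g[\Gamma,S];\, g\,\omega(\Sigma))$ has a solution, where $g\,\omega(\Sigma)=[g\,\omega(\sigma)\mid \sigma\in\Sigma]$.
   Context: A list is a multiset. For a list $\Sigma=[\sigma_1,\dots,\sigma_v]$ of elements of a group, $\omega(\Sigma)=[\omega(\sigma_1),\ldots,\omega(\sigma_v)]$ where $\omega(\sigma)$ is the order of $\sigma$. Let $\Gamma$ be a group (written additively, not necessarily abelian), $S\subseteq\Gamma$ and $\Sigma$ an $|S|$-list of elements of $\Gamma$. A row-sum matrix $RSM_\Gamma(S,g;\Sigma)$ is an $|S|\times g$ matrix ($g\ge2$) with entries in $\Gamma$ such that each column is a permutation (arrangement) of $S$ and the multiset of left-to-right row sums $r_1+r_2+\cdots+r_g$ equals $\Sigma$. For $g\ge3$, $C_g[\Gamma,S]$ is the graph with vertex set $\mathbb{Z}_g\times\Gamma$ and edges $\{(i,x),(i+1,d+x)\}$ for $i\in\mathbb{Z}_g$, $x\in\Gamma$, $d\in S$. For a regular graph $G$ and a list $[a_1,\ldots,a_r]$ of integers $\ge 3$, a solution to $\mathrm{GOP}(G;[a_1,\dots,a_r])$ is a partition of the edge set of $G$ into $2$-factors $F_1,\ldots,F_r$, where $F_i$ is a spanning subgraph all of whose components are cycles of length $a_i$. *)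

theory Defs
  imports Main "HOL-Library.Multiset"
begin

definition add_order :: "'a::group_add \<Rightarrow> nat" where
  "add_order x = (LEAST n. 0 < n \<and> ((+) x ^^ n) 0 = 0)"

definition row_sum :: "(nat \<Rightarrow> nat \<Rightarrow> 'a::monoid_add) \<Rightarrow> nat \<Rightarrow> nat \<Rightarrow> 'a" where
  "row_sum M g i = sum_list (map (\<lambda>j. M i j) [0..<g])"

definition is_RSM :: "'a::group_add set \<Rightarrow> nat \<Rightarrow> 'a multiset \<Rightarrow> (nat \<Rightarrow> nat \<Rightarrow> 'a) \<Rightarrow> bool" where
  "is_RSM S g \<Sigma> M \<longleftrightarrow> 2 \<le> g \<and> finite S \<and> size \<Sigma> = card S \<and>
     (\<forall>j<g. bij_betw (\<lambda>i. M i j) {..<card S} S) \<and>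
     image_mset (row_sum M g) (mset [0..<card S]) = \<Sigma>"

definition Cg_vertices :: "nat \<Rightarrow> (nat \<times> 'a) set" where
  "Cg_vertices g = {..<g} \<times> UNIV"

definition Cg_edges :: "nat \<Rightarrow> 'a::group_add set \<Rightarrow> (nat \<times> 'a) set set" where
  "Cg_edges g S = {{(i, x), ((i + 1) mod g, d + x)} | i x d. i < g \<and> d \<in> S}"

definition cycle_edges :: "'v list \<Rightarrow> 'v set set" where
  "cycle_edges c = {{c ! k, c ! ((k + 1) mod length c)} | k. k < length c}"

definition is_cycle_of_len :: "nat \<Rightarrow> 'v list \<Rightarrow> bool" where
  "is_cycle_of_len a c \<longleftrightarrow> 3 \<le> a \<and> length c = a \<and> distinct c"

definition cycle_factor :: "'v set \<Rightarrow> 'v set set \<Rightarrow> nat \<Rightarrow> 'v set set \<Rightarrow> bool" where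
  "cycle_factor V E a F \<longleftrightarrow> F \<subseteq> E \<and>
     (\<exists>C. (\<forall>c\<in>C. is_cycle_of_len a c \<and> set c \<subseteq> V) \<and>
          (\<forall>v\<in>V. \<exists>!c. c \<in> C \<and> v \<in> set c) \<and>
          F = (\<Union>c\<in>C. cycle_edges c))"

definition GOP_solvable :: "'v set \<Rightarrow> 'v set set \<Rightarrow> nat multiset \<Rightarrow> bool" where
  "GOP_solvable V E A \<longleftrightarrow>
     (\<exists>as F. mset as = A \<and>
        (\<forall>i<length as. cycle_factor V E (as ! i) (F i)) \<and>
        (\<forall>i<length as. \<forall>j<length as. i \<noteq> j \<longrightarrow> F i \<inter> F j = {}) \<and>
        (\<Union>i<length as. F i) = E)"

end

theory Submission
  imports Defs
begin

lemma pow_add_0: "((+) (s::'a::monoid_add) ^^ m) x = ((+) s ^^ m) 0 + x"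
  by (induction m) (simp_all add: add.assoc)

lemma order_exists: "\<exists>n>0. ((+) (s::'a::{group_add,finite}) ^^ n) 0 = 0"
proof -
  let ?f = "\<lambda>n. ((+) s ^^ n) 0"
  have "\<not> inj ?f"
  proof
    assume "inj ?f"
    moreover have "finite (range ?f)" by simp
    ultimately have "finite (UNIV::nat set)" using finite_imageD by blast
    then show False by simp
  qed
  then obtain a b where ab: "a \<noteq> b" "?f a = ?f b" by (auto simp: inj_def)
  then obtain a b where ab: "a < b" "?f a = ?f b"
    by (metis linorder_neqE_nat)
  have "?f b = ((+) s ^^ (b - a)) (?f a)"
    using ab(1) funpow_add[of "b - a" a "(+) s"] by simp
  also have "\<dots> = ?f (b - a) + ?f a" by (rule pow_add_0)
  finally have "?f (b - a) + ?f a = 0 + ?f a" using ab(2) by simp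
  then have "?f (b - a) = 0" by (rule add_right_imp_eq)
  then show ?thesis using ab(1) by (intro exI[of _ "b - a"]) simp
qed

lemma add_order_props:
  "0 < add_order (s::'a::{group_add,finite})" "((+) s ^^ add_order s) 0 = 0"
  using LeastI_ex[OF order_exists[of s]] unfolding add_order_def by auto

lemma add_order_le: "0 < m \<Longrightarrow> ((+) s ^^ m) 0 = 0 \<Longrightarrow> add_order s \<le> m"
  unfolding add_order_def by (auto intro: Least_le)

lemma funpow_in: "\<forall>v\<in>V. p v \<in> V \<Longrightarrow> v \<in> V \<Longrightarrow> (p ^^ k) v \<in> V"
  by (induction k) auto

lemma funpow_inj: "\<forall>v\<in>V. p v \<in> V \<Longrightarrow> inj_on p V \<Longrightarrow> inj_on (p ^^ k) V"
proof (induction k)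
  case 0 then show ?case by simp
next
  case (Suc k)
  have "inj_on (p \<circ> (p ^^ k)) V"
    by (rule comp_inj_on) (use Suc funpow_in[of V p] in \<open>auto intro: inj_on_subset\<close>)
  then show ?case by (simp add: o_def)
qed

lemma funpow_period: "(p ^^ L) w = w \<Longrightarrow> (p ^^ (L * q)) w = w"
  by (induction q) (simp_all add: funpow_add)

lemma funpow_mod: "(p ^^ L) w = w \<Longrightarrow> (p ^^ (k mod L)) w = (p ^^ k) w"
proof -
  assume a: "(p ^^ L) w = w"
  have "k = k mod L + L * (k div L)" by simp
  then have "(p ^^ k) w = (p ^^ (k mod L)) ((p ^^ (L * (k div L))) w)"
    by (metis comp_apply funpow_add)
  then show ?thesis using funpow_period[OF a] by simp
qed

lemma cycle_factor_perm:
  fixes p :: "'v \<Rightarrow> 'v"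
  assumes pV: "\<forall>v\<in>V. p v \<in> V" and inj: "inj_on p V"
    and WV: "W \<subseteq> V" and cov: "\<forall>v\<in>V. \<exists>w\<in>W. \<exists>j. v = (p ^^ j) w"
    and per: "\<forall>w\<in>W. (p ^^ L) w = w"
    and mini: "\<forall>w\<in>W. \<forall>k. 0 < k \<and> k < L \<longrightarrow> (p ^^ k) w \<noteq> w"
    and L3: "3 \<le> L"
    and E: "{{v, p v} | v. v \<in> V} \<subseteq> E"
  shows "cycle_factor V E L {{v, p v} | v. v \<in> V}"
proof -
  define orb where "orb w = range (\<lambda>k. (p ^^ k) w)" for w
  define rep where "rep w = (SOME u. u \<in> W \<and> u \<in> orb w)" for w
  define walk where "walk u = map (\<lambda>k. (p ^^ k) u) [0..<L]" for u
  define C where "C = walk ` rep ` W"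
  have orb_walk: "orb w = set (walk w)" if "w \<in> W" for w
  proof
    show "orb w \<subseteq> set (walk w)"
    proof
      fix y assume "y \<in> orb w"
      then obtain k where "y = (p ^^ k) w" by (auto simp: orb_def)
      then have "y = (p ^^ (k mod L)) w" using funpow_mod[where p=p and L=L and w=w and k=k] per that by simp
      moreover have "k mod L < L" using L3 by simp
      ultimately show "y \<in> set (walk w)" by (auto simp: walk_def)
    qed
  qed (auto simp: walk_def orb_def)
  have orb_eq: "orb u = orb w" if ww: "w \<in> W" and uo: "u \<in> orb w" for u w
  proof -
    obtain k where u: "u = (p ^^ k) w" using uo by (auto simp: orb_def)
    have "orb u \<subseteq> orb w"
    proof
      fix y assume "y \<in> orb u"
      then obtain m where "y = (p ^^ m) u" by (auto simp: orb_def)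
      then have "y = (p ^^ (m + k)) w" by (simp add: u funpow_add)
      then show "y \<in> orb w" unfolding orb_def by (metis rangeI)
    qed
    moreover have "orb w \<subseteq> orb u"
    proof
      fix y assume "y \<in> orb w"
      then obtain j where y: "y = (p ^^ j) w" by (auto simp: orb_def)
      define r where "r = k mod L"
      have ur: "u = (p ^^ r) w" using funpow_mod[where p=p and L=L and w=w and k=k] per ww u r_def by simp
      have "r < L" using L3 r_def by simp
      have "(p ^^ (j + L - r)) u = (p ^^ (j + L - r + r)) w"
        by (simp add: ur funpow_add)
      also have "j + L - r + r = j + L" using \<open>r < L\<close> by simp
      also have "(p ^^ (j + L)) w = y" using per ww y by (simp add: funpow_add)
      finally show "y \<in> orb u" unfolding orb_def by (metis rangeI)
    qed
    ultimately show ?thesis by blast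
  qed
  have self: "w \<in> orb w" for w unfolding orb_def by (metis funpow_0 rangeI)
  have rep: "rep w \<in> W \<and> rep w \<in> orb w" if "w \<in> W" for w
    unfolding rep_def by (rule someI[of _ w]) (use that self in auto)
  have orb_rep: "orb (rep w) = orb w" if "w \<in> W" for w
    using orb_eq rep that by blast
  have orbV: "orb w \<subseteq> V" if "w \<in> V" for w
    using funpow_in[OF pV] that by (auto simp: orb_def)
  have walk_cyc: "is_cycle_of_len L (walk u)" if "u \<in> W" for u
  proof -
    have "(p ^^ k) u \<noteq> (p ^^ l) u" if "k < l" "l < L" for k l
    proof
      assume eq: "(p ^^ k) u = (p ^^ l) u"
      have "(p ^^ l) u = (p ^^ k) ((p ^^ (l - k)) u)"
        using that by (metis add_diff_inverse_nat comp_apply funpow_add less_imp_not_less)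
      then have "(p ^^ k) u = (p ^^ k) ((p ^^ (l - k)) u)" using eq by simp
      moreover have "u \<in> V" using \<open>u \<in> W\<close> WV by auto
      ultimately have "u = (p ^^ (l - k)) u"
        using funpow_inj[OF pV inj, of k] funpow_in[OF pV, of u "l - k"]
        by (auto dest: inj_onD)
      moreover have "0 < l - k" "l - k < L" using that by auto
      ultimately show False using mini \<open>u \<in> W\<close> by metis
    qed
    then have "distinct (walk u)"
      unfolding walk_def distinct_conv_nth by (auto simp: nat_neq_iff) (metis)
    then show ?thesis using L3 by (simp add: is_cycle_of_len_def walk_def)
  qed
  have walk_edges: "cycle_edges (walk u) = {{y, p y} | y. y \<in> orb u}" if "u \<in> W" for u
  proof -
    have nxt: "walk u ! ((k + 1) mod L) = p ((p ^^ k) u)" if "k < L" for k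
    proof (cases "k + 1 < L")
      case True then show ?thesis by (simp add: walk_def)
    next
      case False
      then have "k + 1 = L" using that by simp
      then have "p ((p ^^ k) u) = (p ^^ L) u" by (metis funpow.simps(2) comp_apply Suc_eq_plus1)
      then show ?thesis using per \<open>u \<in> W\<close> \<open>k + 1 = L\<close> L3 by (simp add: walk_def)
    qed
    have len: "length (walk u) = L" by (simp add: walk_def)
    have nthw: "walk u ! k = (p ^^ k) u" if "k < L" for k using that by (simp add: walk_def)
    have "cycle_edges (walk u) = {{(p ^^ k) u, p ((p ^^ k) u)} | k. k < L}"
      unfolding cycle_edges_def len
    proof (intro Collect_cong iffI)
      fix x assume "\<exists>k. x = {walk u ! k, walk u ! ((k + 1) mod L)} \<and> k < L"
      then obtain k where "x = {walk u ! k, walk u ! ((k + 1) mod L)}" "k < L" by blast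
      then show "\<exists>k. x = {(p ^^ k) u, p ((p ^^ k) u)} \<and> k < L" using nthw nxt by metis
    next
      fix x assume "\<exists>k. x = {(p ^^ k) u, p ((p ^^ k) u)} \<and> k < L"
      then obtain k where "x = {(p ^^ k) u, p ((p ^^ k) u)}" "k < L" by blast
      then show "\<exists>k. x = {walk u ! k, walk u ! ((k + 1) mod L)} \<and> k < L" using nthw nxt by metis
    qed
    also have "\<dots> = {{y, p y} | y. y \<in> set (walk u)}"
      by (auto simp: walk_def)
    finally show ?thesis using orb_walk that by simp
  qed
  show ?thesis
    unfolding cycle_factor_def
  proof (intro conjI exI[of _ C])
    show "{{v, p v} | v. v \<in> V} \<subseteq> E" by (rule E)
    show "\<forall>c\<in>C. is_cycle_of_len L c \<and> set c \<subseteq> V"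
    proof
      fix c assume "c \<in> C"
      then obtain w where w: "w \<in> W" "c = walk (rep w)" by (auto simp: C_def)
      have "set c = orb (rep w)" using orb_walk rep w by simp
      then have "set c \<subseteq> V" using orbV rep w WV by auto
      then show "is_cycle_of_len L c \<and> set c \<subseteq> V" using walk_cyc rep w by simp
    qed
    show "\<forall>v\<in>V. \<exists>!c. c \<in> C \<and> v \<in> set c"
    proof
      fix v assume "v \<in> V"
      then obtain w j where w: "w \<in> W" "v = (p ^^ j) w" using cov by blast
      have vo: "v \<in> orb w" using w by (auto simp: orb_def)
      show "\<exists>!c. c \<in> C \<and> v \<in> set c"
      proof (rule ex1I[of _ "walk (rep w)"])
        show "walk (rep w) \<in> C \<and> v \<in> set (walk (rep w))"
          using w vo orb_walk[of "rep w"] rep orb_rep by (auto simp: C_def)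
      next
        fix c assume c: "c \<in> C \<and> v \<in> set c"
        then obtain w' where w': "w' \<in> W" "c = walk (rep w')" by (auto simp: C_def)
        have "v \<in> orb w'" using c w' orb_walk[of "rep w'"] rep orb_rep by auto
        then have "orb w' = orb w" using orb_eq w' w vo by metis
        then have "rep w' = rep w" by (simp add: rep_def)
        then show "c = walk (rep w)" using w' by simp
      qed
    qed
    show "{{v, p v} | v. v \<in> V} = (\<Union>c\<in>C. cycle_edges c)"
    proof
      show "(\<Union>c\<in>C. cycle_edges c) \<subseteq> {{v, p v} | v. v \<in> V}"
      proof
        fix e assume "e \<in> (\<Union>c\<in>C. cycle_edges c)"
        then obtain w where w: "w \<in> W" "e \<in> cycle_edges (walk (rep w))" by (auto simp: C_def)
        then have "e \<in> {{y, p y} | y. y \<in> orb w}" using walk_edges rep orb_rep by auto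
        then show "e \<in> {{v, p v} | v. v \<in> V}" using orbV w WV by blast
      qed
      show "{{v, p v} | v. v \<in> V} \<subseteq> (\<Union>c\<in>C. cycle_edges c)"
      proof
        fix e assume "e \<in> {{v, p v} | v. v \<in> V}"
        then obtain v where v: "v \<in> V" "e = {v, p v}" by blast
        then obtain w j where w: "w \<in> W" "v = (p ^^ j) w" using cov by blast
        have "v \<in> orb w" using w by (auto simp: orb_def)
        then have "e \<in> cycle_edges (walk (rep w))"
          using walk_edges[of "rep w"] rep orb_rep w v by auto
        then show "e \<in> (\<Union>c\<in>C. cycle_edges c)" using w by (auto simp: C_def)
      qed
    qed
  qed
qed

lemma mod_succ_inj: "a < (g::nat) \<Longrightarrow> b < g \<Longrightarrow> (a + 1) mod g = (b + 1) mod g \<Longrightarrow> a = b"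
  by (metis Suc_eq_plus1 Suc_lessI mod_less mod_self nat.inject zero_neq_one less_not_refl3 add_eq_0_iff_both_eq_0)

lemma row_factor:
  fixes r :: "nat \<Rightarrow> 'a::{group_add,finite}"
  assumes g: "3 \<le> g"
    and pdef: "p = (\<lambda>v. ((fst v + 1) mod g, r (g - 1 - fst v) + snd v))"
    and E: "{{v, p v} | v. v \<in> Cg_vertices g} \<subseteq> E"
  shows "cycle_factor (Cg_vertices g) E (g * add_order (sum_list (map r [0..<g])))
           {{v, p v} | v. v \<in> Cg_vertices g}"
proof -
  define \<sigma> where "\<sigma> = sum_list (map r [0..<g])"
  define L where "L = g * add_order \<sigma>"
  define V :: "(nat \<times> 'a) set" where "V = Cg_vertices g"
  define W :: "(nat \<times> 'a) set" where "W = {0} \<times> UNIV"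
  have V: "V = {..<g} \<times> UNIV" by (simp add: V_def Cg_vertices_def)
  have gpos: "0 < g" using g by simp
  have pV: "\<forall>v\<in>V. p v \<in> V" using gpos by (auto simp: V pdef)
  have inj: "inj_on p V"
  proof (rule inj_onI)
    fix v w assume "v \<in> V" "w \<in> V" "p v = p w"
    then have a: "fst v < g" "fst w < g" "(fst v + 1) mod g = (fst w + 1) mod g"
      "r (g - 1 - fst v) + snd v = r (g - 1 - fst w) + snd w"
      by (auto simp: V pdef)
    then have "fst v = fst w" using mod_succ_inj by blast
    with a(4) have "snd v = snd w" by simp
    with \<open>fst v = fst w\<close> show "v = w" by (simp add: prod_eq_iff)
  qed
  have WV: "W \<subseteq> V" using gpos by (auto simp: V W_def)
  have walk0: "(p ^^ k) (0, x) = (k mod g, sum_list (map r [g - k..<g]) + x)" if "k \<le> g" for k x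
    using that
  proof (induction k)
    case 0 then show ?case by simp
  next
    case (Suc k)
    then have kg: "k < g" by simp
    have ups: "[g - Suc k..<g] = (g - 1 - k) # [g - k..<g]"
      using kg by (simp add: upt_conv_Cons Suc_diff_Suc)
    show ?case using Suc kg
      by (simp add: pdef ups add.assoc mod_Suc_eq)
  qed
  have cov: "\<forall>v\<in>V. \<exists>w\<in>W. \<exists>j. v = (p ^^ j) w"
  proof
    fix v assume "v \<in> V"
    then obtain j y where v: "v = (j, y)" "j < g" by (auto simp: V)
    define s where "s = sum_list (map r [g - j..<g])"
    have "(p ^^ j) (0, - s + y) = (j, s + (- s + y))"
      using walk0[of j "- s + y"] v by (simp add: s_def)
    also have "\<dots> = v" using v by (simp add: add.assoc[symmetric])
    finally show "\<exists>w\<in>W. \<exists>j. v = (p ^^ j) w" by (metis W_def UNIV_I insertI1 mem_Sigma_iff)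
  qed
  have fstp: "fst ((p ^^ k) v) = (fst v + k) mod g" if "fst v < g" for k v
    using that by (induction k) (simp_all add: pdef mod_Suc_eq)
  have gm: "(p ^^ (g * m)) (0, x) = (0, ((+) \<sigma> ^^ m) x)" for m x
  proof (induction m arbitrary: x)
    case 0 then show ?case by simp
  next
    case (Suc m)
    have "(p ^^ (g * Suc m)) (0, x) = (p ^^ g) ((p ^^ (g * m)) (0, x))"
      by (simp add: funpow_add)
    also have "\<dots> = (0, \<sigma> + ((+) \<sigma> ^^ m) x)"
      using Suc walk0[of g] by (simp add: \<sigma>_def)
    finally show ?case by simp
  qed
  have per: "\<forall>w\<in>W. (p ^^ L) w = w"
  proof
    fix w assume "w \<in> W"
    then obtain x where wx: "w = (0, x)" by (auto simp: W_def)
    have "(p ^^ L) w = (0, ((+) \<sigma> ^^ add_order \<sigma>) x)" using gm wx by (simp add: L_def)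
    also have "((+) \<sigma> ^^ add_order \<sigma>) x = ((+) \<sigma> ^^ add_order \<sigma>) 0 + x"
      by (rule pow_add_0)
    also have "\<dots> = x" using add_order_props(2)[of \<sigma>] by simp
    finally show "(p ^^ L) w = w" using wx by simp
  qed
  have mini: "\<forall>w\<in>W. \<forall>k. 0 < k \<and> k < L \<longrightarrow> (p ^^ k) w \<noteq> w"
  proof (intro ballI allI impI notI)
    fix w k assume w: "w \<in> W" and k: "0 < k \<and> k < L" and eq: "(p ^^ k) w = w"
    obtain x where wx: "w = (0, x)" using w by (auto simp: W_def)
    have "fst ((p ^^ k) w) = k mod g" using fstp[of w k] wx gpos by simp
    then have "k mod g = 0" using eq wx by simp
    then have kk: "k = g * (k div g)" by (metis mult_div_mod_eq add_0_right)
    define m where "m = k div g"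
    have mpos: "0 < m" using k kk m_def by (metis mult_0_right neq0_conv)
    have "(0, ((+) \<sigma> ^^ m) x) = (0, x)" using gm[of m x] eq wx kk m_def by simp
    then have "((+) \<sigma> ^^ m) x = x" by simp
    then have "((+) \<sigma> ^^ m) 0 + x = 0 + x" by (metis pow_add_0 add_0)
    then have "((+) \<sigma> ^^ m) 0 = 0" by (rule add_right_imp_eq)
    then have "add_order \<sigma> \<le> m" using add_order_le mpos by blast
    then have "L \<le> k" using kk m_def unfolding L_def by (metis mult_le_mono2)
    then show False using k by simp
  qed
  have L3: "3 \<le> L"
  proof -
    have "1 \<le> add_order \<sigma>" using add_order_props(1)[of \<sigma>] by simp
    then have "g * 1 \<le> L" unfolding L_def by (rule mult_le_mono2)
    then show ?thesis using g by simp
  qed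
  have "cycle_factor V E L {{v, p v} | v. v \<in> V}"
    by (rule cycle_factor_perm[OF pV inj WV cov per mini L3]) (use E in \<open>simp add: V_def\<close>)
  then show ?thesis by (simp add: V_def L_def \<sigma>_def)
qed

lemma no_two_cycle:
  assumes g: "3 \<le> (g::nat)" and ag: "a < g" and bg: "b < g"
    and ab: "a = (b + 1) mod g" and ba: "b = (a + 1) mod g"
  shows False
proof (cases "b + 1 < g")
  case True
  then have "(b + 1) mod g = b + 1" by simp
  then have a: "a = b + 1" using ab by linarith
  show False
  proof (cases "a + 1 < g")
    case True
    then have "(a + 1) mod g = a + 1" by simp
    then show False using ba a by linarith
  next
    case False
    then have "a + 1 = g" using ag by simp
    then have "(a + 1) mod g = 0" by simp
    then have "b = 0" using ba by simp
    then show False using a \<open>a + 1 = g\<close> g by linarith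
  qed
next
  case False
  then have bg1: "b + 1 = g" using bg by simp
  then have "(b + 1) mod g = 0" by simp
  then have "a = 0" using ab by simp
  then have "(a + 1) mod g = 1" using g by simp
  then have "b = 1" using ba by simp
  then show False using bg1 g by simp
qed

theorem mainTheorem4:
  fixes S :: "'a::{group_add, finite} set"
    and g :: nat
    and \<Sigma> :: "'a multiset"
  assumes "3 \<le> g"
    and "size \<Sigma> = card S"
    and "\<exists>M. is_RSM S g \<Sigma> M"
  shows "GOP_solvable (Cg_vertices g) (Cg_edges g S)
           (image_mset (\<lambda>\<sigma>. g * add_order \<sigma>) \<Sigma>)"
proof -
  obtain M where RSM: "is_RSM S g \<Sigma> M" using assms(3) by blast
  define n where "n = card S"
  have col: "\<forall>j<g. bij_betw (\<lambda>i. M i j) {..<n} S"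
    and Sig: "image_mset (row_sum M g) (mset [0..<n]) = \<Sigma>"
    using RSM by (auto simp: is_RSM_def n_def)
  define V :: "(nat \<times> 'a) set" where "V = Cg_vertices g"
  have V: "V = {..<g} \<times> UNIV" by (simp add: V_def Cg_vertices_def)
  define E where "E = Cg_edges g S"
  define p where "p i = (\<lambda>v. ((fst v + 1) mod g, M i (g - 1 - fst v) + snd v))" for i
  define F where "F i = {{v, p i v} | v. v \<in> V}" for i
  define as where "as = map (\<lambda>i. g * add_order (row_sum M g i)) [0..<n]"
  have gpos: "0 < g" using assms(1) by simp
  have inS: "M i (g - 1 - j) \<in> S" if "i < n" for i j
  proof -
    have "g - 1 - j < g" using gpos by simp
    then show ?thesis using col that bij_betw_apply by fastforce
  qed
  have Fsub: "F i \<subseteq> E" if "i < n" for i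
  proof
    fix e assume "e \<in> F i"
    then obtain j x where e: "e = {(j, x), p i (j, x)}" "j < g" by (auto simp: F_def V)
    then show "e \<in> E" unfolding E_def Cg_edges_def p_def using inS[OF that, of j] by auto
  qed
  show ?thesis
    unfolding GOP_solvable_def
  proof (intro exI[of _ as] exI[of _ F] conjI allI impI)
    show "mset as = image_mset (\<lambda>\<sigma>. g * add_order \<sigma>) \<Sigma>"
      unfolding Sig[symmetric] as_def by (simp add: multiset.map_comp o_def)
  next
    fix i assume "i < length as"
    then have i: "i < n" by (simp add: as_def)
    have "cycle_factor (Cg_vertices g) E (g * add_order (sum_list (map (M i) [0..<g])))
           {{v, p i v} | v. v \<in> Cg_vertices g}"
      by (rule row_factor[OF assms(1)]) (use Fsub[OF i] in \<open>simp_all add: F_def V_def p_def\<close>)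
    then show "cycle_factor (Cg_vertices g) (Cg_edges g S) (as ! i) (F i)"
      using i by (simp add: as_def row_sum_def F_def V_def E_def)
  next
    fix i i' assume "i < length as" "i' < length as" "i \<noteq> i'"
    then have i: "i < n" "i' < n" "i \<noteq> i'" by (auto simp: as_def)
    show "F i \<inter> F i' = {}"
    proof (rule ccontr)
      assume "F i \<inter> F i' \<noteq> {}"
      then obtain v v' where v: "v \<in> V" "v' \<in> V" "{v, p i v} = {v', p i' v'}"
        by (auto simp: F_def)
      then consider "v = v'" "p i v = p i' v'" | "v = p i' v'" "p i v = v'"
        using v(3) unfolding doubleton_eq_iff by blast
      then show False
      proof cases
        case 1
        then have eq: "M i (g - 1 - fst v) = M i' (g - 1 - fst v)" by (simp add: p_def)
        have "g - 1 - fst v < g" using gpos by simp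
        then have inj: "inj_on (\<lambda>i. M i (g - 1 - fst v)) {..<n}"
          using col bij_betw_imp_inj_on by blast
        have "i = i'" by (rule inj_onD[OF inj eq]) (use i in auto)
        then show False using i by simp
      next
        case 2
        have f1: "fst v = (fst v' + 1) mod g" using 2(1) by (simp add: p_def)
        have "fst (p i v) = fst v'" using 2(2) by simp
        then have f2: "fst v' = (fst v + 1) mod g" by (simp add: p_def)
        note f1 f2
        moreover have "fst v < g" "fst v' < g" using v by (auto simp: V)
        ultimately show False using no_two_cycle[OF assms(1)] by blast
      qed
    qed
  next
    show "(\<Union>i<length as. F i) = Cg_edges g S"
    proof
      show "(\<Union>i<length as. F i) \<subseteq> Cg_edges g S"
        using Fsub by (auto simp: as_def E_def)
      show "Cg_edges g S \<subseteq> (\<Union>i<length as. F i)"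
      proof
        fix e assume "e \<in> Cg_edges g S"
        then obtain j x d where e: "e = {(j, x), ((j + 1) mod g, d + x)}" "j < g" "d \<in> S"
          by (auto simp: Cg_edges_def)
        have "g - 1 - j < g" using gpos by simp
        then have "(\<lambda>i. M i (g - 1 - j)) ` {..<n} = S" using col by (simp add: bij_betw_def)
        then obtain i where i: "i < n" "M i (g - 1 - j) = d" using e(3) by auto
        have "e = {(j, x), p i (j, x)}" using e i by (simp add: p_def)
        moreover have "(j, x) \<in> V" using e by (simp add: V)
        ultimately have "e \<in> F i" by (auto simp: F_def)
        then show "e \<in> (\<Union>i<length as. F i)" using i by (auto simp: as_def)
      qed
    qed
  qed
qed

end
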